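(* Let $K$ be a field, $\mathcal A$ a $K$-algebra, $\vartheta$ any one of the four types (left, right, pre-two-sided, two-sided), and $(M_i)_{i\ge1}$ a sequence of non-trivial $\vartheta$-Mathieu subspaces of $\mathcal A$ with $M_i\subseteq M_{i+1}$ for all $i\ge1$. Assume every element of $\sqrt{\bigcup_{i\ge1}M_i}$ is algebraic over $K$. Then $\bigcup_{i\ge1}M_i$ is a non-trivial $\vartheta$-Mathieu subspace of $\mathcal A$.
   Context: All algebras are associative and unital. $\sqrt S$ is the set of $a\in\mathcal A$ with $a^m\in S$ for all sufficiently large $m$. A subspace is non-trivial if it is neither $0$ nor $\mathcal A$. A $K$-subspace $V$ is a left (resp. right) Mathieu subspace if whenever $a^m\in V$ for all $m\ge1$, then for every $b\in\mathcal A$, $ba^m\in V$ (resp. $a^mb\in V$) for all sufficiently large $m$; pre-two-sided if both left and right; two-sided if whenever $a^m\in V$ for all $m\ge1$, for all $b,c\in\mathcal A$, $ba^mc\in V$ for all sufficiently large $m$. *)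

theory Defs
  imports Main "HOL-Computational_Algebra.Polynomial"
begin

definition is_K_algebra :: "('k::field \<Rightarrow> 'a::ring_1 \<Rightarrow> 'a) \<Rightarrow> bool" where
  "is_K_algebra sc \<longleftrightarrow> vector_space sc \<and>
     (\<forall>c x y. sc c (x * y) = sc c x * y \<and> sc c (x * y) = x * sc c y)"

definition alg_poly_eval :: "('k::field \<Rightarrow> 'a::ring_1 \<Rightarrow> 'a) \<Rightarrow> 'k poly \<Rightarrow> 'a \<Rightarrow> 'a" where
  "alg_poly_eval sc p a = (\<Sum>i\<le>degree p. sc (coeff p i) (a ^ i))"

definition algebraic_over :: "('k::field \<Rightarrow> 'a::ring_1 \<Rightarrow> 'a) \<Rightarrow> 'a \<Rightarrow> bool" where
  "algebraic_over sc a \<longleftrightarrow> (\<exists>p. p \<noteq> 0 \<and> alg_poly_eval sc p a = 0)"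

definition rad :: "'a::monoid_mult set \<Rightarrow> 'a set" where
  "rad S = {a. \<exists>N. \<forall>m\<ge>N. a ^ m \<in> S}"

definition nontrivial_subspace :: "'a::ring_1 set \<Rightarrow> bool" where
  "nontrivial_subspace V \<longleftrightarrow> V \<noteq> {0} \<and> V \<noteq> UNIV"

datatype mathieu_type = LeftM | RightM | PreTwoSidedM | TwoSidedM

definition left_mathieu :: "('k::field \<Rightarrow> 'a::ring_1 \<Rightarrow> 'a) \<Rightarrow> 'a set \<Rightarrow> bool" where
  "left_mathieu sc V \<longleftrightarrow> module.subspace sc V \<and>
     (\<forall>a. (\<forall>m\<ge>1. a ^ m \<in> V) \<longrightarrow> (\<forall>b. \<exists>N. \<forall>m\<ge>N. b * a ^ m \<in> V))"

definition right_mathieu :: "('k::field \<Rightarrow> 'a::ring_1 \<Rightarrow> 'a) \<Rightarrow> 'a set \<Rightarrow> bool" where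
  "right_mathieu sc V \<longleftrightarrow> module.subspace sc V \<and>
     (\<forall>a. (\<forall>m\<ge>1. a ^ m \<in> V) \<longrightarrow> (\<forall>b. \<exists>N. \<forall>m\<ge>N. a ^ m * b \<in> V))"

definition two_sided_mathieu :: "('k::field \<Rightarrow> 'a::ring_1 \<Rightarrow> 'a) \<Rightarrow> 'a set \<Rightarrow> bool" where
  "two_sided_mathieu sc V \<longleftrightarrow> module.subspace sc V \<and>
     (\<forall>a. (\<forall>m\<ge>1. a ^ m \<in> V) \<longrightarrow> (\<forall>b c. \<exists>N. \<forall>m\<ge>N. b * a ^ m * c \<in> V))"

fun is_mathieu :: "mathieu_type \<Rightarrow> ('k::field \<Rightarrow> 'a::ring_1 \<Rightarrow> 'a) \<Rightarrow> 'a set \<Rightarrow> bool" where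
  "is_mathieu LeftM sc V = left_mathieu sc V"
| "is_mathieu RightM sc V = right_mathieu sc V"
| "is_mathieu PreTwoSidedM sc V = (left_mathieu sc V \<and> right_mathieu sc V)"
| "is_mathieu TwoSidedM sc V = two_sided_mathieu sc V"

end

theory Submission
  imports Defs
begin

lemma pow_in:
  fixes sc :: "'k::field \<Rightarrow> 'a::ring_1 \<Rightarrow> 'a"
  assumes alg: "is_K_algebra sc" and S: "module.subspace sc S"
    and p: "p \<noteq> 0" and ev: "alg_poly_eval sc p a = 0"
    and base: "\<forall>m. 1 \<le> m \<and> m \<le> degree p \<longrightarrow> a ^ m \<in> S"
  shows "1 \<le> n \<Longrightarrow> a ^ n \<in> S"
proof (induction n rule: less_induct)
  case (less n)
  interpret vector_space sc using alg unfolding is_K_algebra_def by blast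
  have comm: "\<And>c x y. sc c (x * y) = x * sc c y" using alg unfolding is_K_algebra_def by blast
  define d where "d = degree p"
  define lc where "lc = coeff p d"
  have lc0: "lc \<noteq> 0" using p by (simp add: lc_def d_def)
  show ?case
  proof (cases "n \<le> d")
    case True then show ?thesis using base less.prems d_def by auto
  next
    case False
    have "0 = (\<Sum>i\<le>d. sc (coeff p i) (a ^ i))" using ev by (simp add: alg_poly_eval_def d_def)
    also have "\<dots> = (\<Sum>i<d. sc (coeff p i) (a ^ i)) + sc lc (a ^ d)"
      by (simp add: lessThan_Suc_atMost[symmetric] lc_def)
    finally have ad: "sc lc (a ^ d) = - (\<Sum>i<d. sc (coeff p i) (a ^ i))"
      by (simp add: eq_neg_iff_add_eq_0 add.commute)
    have an: "a ^ n = a ^ (n - d) * a ^ d" using False by (simp add: power_add[symmetric])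
    have "sc lc (a ^ n) = a ^ (n - d) * sc lc (a ^ d)" using an comm by simp
    also have "\<dots> = - (\<Sum>i<d. sc (coeff p i) (a ^ (n - d + i)))"
      by (simp add: ad sum_distrib_left comm[symmetric] power_add)
    finally have e: "sc lc (a ^ n) = - (\<Sum>i<d. sc (coeff p i) (a ^ (n - d + i)))" .
    have "(\<Sum>i<d. sc (coeff p i) (a ^ (n - d + i))) \<in> S"
    proof (rule subspace_sum[OF S])
      fix i assume "i \<in> {..<d}"
      then have "a ^ (n - d + i) \<in> S" using False by (intro less.IH) auto
      then show "sc (coeff p i) (a ^ (n - d + i)) \<in> S" by (rule subspace_scale[OF S])
    qed
    then have "sc lc (a ^ n) \<in> S" using e subspace_neg[OF S] by simp
    then have "sc (inverse lc) (sc lc (a ^ n)) \<in> S" by (rule subspace_scale[OF S])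
    then show ?thesis using lc0 by simp
  qed
qed

lemma mathieu_subspace: "is_mathieu t sc V \<Longrightarrow> module.subspace sc V"
  by (cases t) (auto simp: left_mathieu_def right_mathieu_def two_sided_mathieu_def)

lemma all_in:
  fixes V :: "'a::ring_1 set"
  assumes h: "\<forall>b. \<exists>N. \<forall>m\<ge>N. b * 1 ^ m * 1 \<in> V"
  shows "V = UNIV"
proof -
  have "b \<in> V" for b
  proof -
    from h obtain N where "\<forall>m\<ge>N. b * 1 ^ m * 1 \<in> V" by blast
    then have "b * 1 ^ N * 1 \<in> V" by blast
    then show "b \<in> V" by simp
  qed
  then show ?thesis by blast
qed

lemma mathieu_one:
  fixes V :: "'a::ring_1 set"
  assumes m: "is_mathieu t sc V" and o: "1 \<in> V"
  shows "V = UNIV"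
proof -
  have p1: "\<forall>m\<ge>1. (1::'a) ^ m \<in> V" using o by simp
  show ?thesis
  proof (cases t)
    case LeftM
    then have "left_mathieu sc V" using m by simp
    then have "(\<forall>m\<ge>1. (1::'a) ^ m \<in> V) \<longrightarrow> (\<forall>b. \<exists>N. \<forall>m\<ge>N. b * 1 ^ m \<in> V)"
      unfolding left_mathieu_def by (rule spec[OF conjunct2])
    then have "\<forall>b. \<exists>N. \<forall>m\<ge>N. b * 1 ^ m \<in> V" using p1 by (rule mp)
    then show ?thesis by (intro all_in) (simp only: mult_1_right mult_1_left power_one simp_thms)
  next
    case RightM
    then have "right_mathieu sc V" using m by simp
    then have "(\<forall>m\<ge>1. (1::'a) ^ m \<in> V) \<longrightarrow> (\<forall>b. \<exists>N. \<forall>m\<ge>N. 1 ^ m * b \<in> V)"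
      unfolding right_mathieu_def by (rule spec[OF conjunct2])
    then have "\<forall>b. \<exists>N. \<forall>m\<ge>N. 1 ^ m * b \<in> V" using p1 by (rule mp)
    then show ?thesis by (intro all_in) (simp only: mult_1_right mult_1_left power_one simp_thms)
  next
    case PreTwoSidedM
    then have "left_mathieu sc V" using m by simp
    then have "(\<forall>m\<ge>1. (1::'a) ^ m \<in> V) \<longrightarrow> (\<forall>b. \<exists>N. \<forall>m\<ge>N. b * 1 ^ m \<in> V)"
      unfolding left_mathieu_def by (rule spec[OF conjunct2])
    then have "\<forall>b. \<exists>N. \<forall>m\<ge>N. b * 1 ^ m \<in> V" using p1 by (rule mp)
    then show ?thesis by (intro all_in) (simp only: mult_1_right mult_1_left power_one simp_thms)
  next
    case TwoSidedM
    then have "two_sided_mathieu sc V" using m by simp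
    then have "(\<forall>m\<ge>1. (1::'a) ^ m \<in> V) \<longrightarrow> (\<forall>b c. \<exists>N. \<forall>m\<ge>N. b * 1 ^ m * c \<in> V)"
      unfolding two_sided_mathieu_def by (rule spec[OF conjunct2])
    then have "\<forall>b c. \<exists>N. \<forall>m\<ge>N. b * 1 ^ m * c \<in> V" using p1 by (rule mp)
    then have "\<forall>b. \<exists>N. \<forall>m\<ge>N. b * 1 ^ m * 1 \<in> V" by blast
    then show ?thesis by (rule all_in)
  qed
qed

theorem proposition4p18:
  fixes sc :: "'k::field \<Rightarrow> 'a::ring_1 \<Rightarrow> 'a"
    and \<theta> :: mathieu_type
    and M :: "nat \<Rightarrow> 'a set"
  assumes "is_K_algebra sc"
    and "\<forall>i\<ge>1. is_mathieu \<theta> sc (M i) \<and> nontrivial_subspace (M i)"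
    and "\<forall>i\<ge>1. M i \<subseteq> M (Suc i)"
    and "\<forall>a \<in> rad (\<Union>i\<in>{1..}. M i). algebraic_over sc a"
  shows "is_mathieu \<theta> sc (\<Union>i\<in>{1..}. M i) \<and> nontrivial_subspace (\<Union>i\<in>{1..}. M i)"
proof -
  note alg = assms(1)
  interpret vector_space sc using alg unfolding is_K_algebra_def by blast
  define U where "U = (\<Union>i\<in>{1..}. M i)"
  have mono: "M i \<subseteq> M j" if "1 \<le> i" "i \<le> j" for i j
    using that(2,1)
  proof (induction j rule: dec_induct)
    case base then show ?case by simp
  next
    case (step j)
    have "M j \<subseteq> M (Suc j)" using assms(3) step by auto
    then show ?case using step by blast
  qed
  have sub: "subspace (M i)" if "1 \<le> i" for i
    using assms(2) that mathieu_subspace by blast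
  have one: "1 \<notin> M i" if "1 \<le> i" for i
    using assms(2) that mathieu_one unfolding nontrivial_subspace_def by blast
  have subU: "subspace U"
    unfolding subspace_def
  proof (intro conjI ballI allI)
    show "0 \<in> U" unfolding U_def using sub[of 1] subspace_0 by auto
  next
    fix x c assume "x \<in> U"
    then obtain i where "i \<ge> 1" "x \<in> M i" unfolding U_def by auto
    then show "sc c x \<in> U" unfolding U_def using sub subspace_scale by blast
  next
    fix x y assume "x \<in> U" "y \<in> U"
    then obtain i j where ij: "i \<ge> 1" "x \<in> M i" "j \<ge> 1" "y \<in> M j" unfolding U_def by auto
    then have "x \<in> M (max i j)" "y \<in> M (max i j)" using mono[of i "max i j"] mono[of j "max i j"] by auto
    then have "x + y \<in> M (max i j)" using sub[of "max i j"] subspace_add ij by auto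
    then show "x + y \<in> U" unfolding U_def using ij by auto
  qed
  have key: "\<exists>i\<ge>1. \<forall>m\<ge>1. a ^ m \<in> M i" if ha: "\<forall>m\<ge>1. a ^ m \<in> U" for a
  proof -
    have "a \<in> rad U" unfolding rad_def using ha by (intro CollectI exI[of _ 1]) simp
    then obtain p where p: "p \<noteq> 0" "alg_poly_eval sc p a = 0"
      using assms(4) unfolding U_def algebraic_over_def by blast
    have fin: "\<exists>i\<ge>1. \<forall>m. 1 \<le> m \<and> m \<le> d \<longrightarrow> a ^ m \<in> M i" for d
    proof (induction d)
      case 0 then show ?case by auto
    next
      case (Suc d)
      then obtain i where i: "i \<ge> 1" "\<forall>m. 1 \<le> m \<and> m \<le> d \<longrightarrow> a ^ m \<in> M i" by blast
      have "a ^ Suc d \<in> U" using ha[rule_format, of "Suc d"] by simp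
      then obtain j where j: "j \<ge> 1" "a ^ Suc d \<in> M j" unfolding U_def by blast
      have "\<forall>m. 1 \<le> m \<and> m \<le> Suc d \<longrightarrow> a ^ m \<in> M (max i j)"
      proof (intro allI impI)
        fix m assume m: "1 \<le> m \<and> m \<le> Suc d"
        show "a ^ m \<in> M (max i j)"
        proof (cases "m = Suc d")
          case True then show ?thesis using j mono[of j "max i j"] by auto
        next
          case False then show ?thesis using m i mono[of i "max i j"] by auto
        qed
      qed
      then show ?case using i by (intro exI[of _ "max i j"]) auto
    qed
    then obtain i where i: "i \<ge> 1" "\<forall>m. 1 \<le> m \<and> m \<le> degree p \<longrightarrow> a ^ m \<in> M i" by blast
    have "\<forall>m\<ge>1. a ^ m \<in> M i" using pow_in[OF alg sub[OF i(1)] p i(2)] by blast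
    then show ?thesis using i(1) by blast
  qed
  have Mi_U: "M i \<subseteq> U" if "i \<ge> 1" for i unfolding U_def using that by auto
  have math: "is_mathieu \<theta> sc U"
  proof (cases \<theta>)
    case LeftM
    show ?thesis unfolding LeftM is_mathieu.simps left_mathieu_def
    proof (intro conjI subU allI impI)
      fix a b assume "\<forall>m\<ge>1. a ^ m \<in> U"
      then obtain i where i: "i \<ge> 1" "\<forall>m\<ge>1. a ^ m \<in> M i" using key by blast
      then have "left_mathieu sc (M i)" using assms(2) LeftM by auto
      then obtain N where "\<forall>m\<ge>N. b * a ^ m \<in> M i" using i unfolding left_mathieu_def by blast
      then show "\<exists>N. \<forall>m\<ge>N. b * a ^ m \<in> U" using Mi_U[OF i(1)] by blast
    qed
  next
    case RightM
    show ?thesis unfolding RightM is_mathieu.simps right_mathieu_def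
    proof (intro conjI subU allI impI)
      fix a b assume "\<forall>m\<ge>1. a ^ m \<in> U"
      then obtain i where i: "i \<ge> 1" "\<forall>m\<ge>1. a ^ m \<in> M i" using key by blast
      then have "right_mathieu sc (M i)" using assms(2) RightM by auto
      then obtain N where "\<forall>m\<ge>N. a ^ m * b \<in> M i" using i unfolding right_mathieu_def by blast
      then show "\<exists>N. \<forall>m\<ge>N. a ^ m * b \<in> U" using Mi_U[OF i(1)] by blast
    qed
  next
    case PreTwoSidedM
    show ?thesis unfolding PreTwoSidedM is_mathieu.simps left_mathieu_def right_mathieu_def
    proof (intro conjI subU allI impI)
      fix a b assume "\<forall>m\<ge>1. a ^ m \<in> U"
      then obtain i where i: "i \<ge> 1" "\<forall>m\<ge>1. a ^ m \<in> M i" using key by blast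
      then have "left_mathieu sc (M i)" using assms(2) PreTwoSidedM by auto
      then obtain N where "\<forall>m\<ge>N. b * a ^ m \<in> M i" using i unfolding left_mathieu_def by blast
      then show "\<exists>N. \<forall>m\<ge>N. b * a ^ m \<in> U" using Mi_U[OF i(1)] by blast
    next
      fix a b assume "\<forall>m\<ge>1. a ^ m \<in> U"
      then obtain i where i: "i \<ge> 1" "\<forall>m\<ge>1. a ^ m \<in> M i" using key by blast
      then have "right_mathieu sc (M i)" using assms(2) PreTwoSidedM by auto
      then obtain N where "\<forall>m\<ge>N. a ^ m * b \<in> M i" using i unfolding right_mathieu_def by blast
      then show "\<exists>N. \<forall>m\<ge>N. a ^ m * b \<in> U" using Mi_U[OF i(1)] by blast
    qed
  next
    case TwoSidedM
    show ?thesis unfolding TwoSidedM is_mathieu.simps two_sided_mathieu_def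
    proof (intro conjI subU allI impI)
      fix a b c assume "\<forall>m\<ge>1. a ^ m \<in> U"
      then obtain i where i: "i \<ge> 1" "\<forall>m\<ge>1. a ^ m \<in> M i" using key by blast
      then have "two_sided_mathieu sc (M i)" using assms(2) TwoSidedM by auto
      then obtain N where "\<forall>m\<ge>N. b * a ^ m * c \<in> M i" using i unfolding two_sided_mathieu_def by blast
      then show "\<exists>N. \<forall>m\<ge>N. b * a ^ m * c \<in> U" using Mi_U[OF i(1)] by blast
    qed
  qed
  have "U \<noteq> UNIV" using one unfolding U_def by blast
  moreover have "U \<noteq> {0}"
  proof
    assume U0: "U = {0}"
    have "M 1 \<noteq> {0}" using assms(2) unfolding nontrivial_subspace_def by auto
    moreover have "0 \<in> M 1" using sub[of 1] subspace_0 by auto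
    ultimately obtain x where "x \<in> M 1" "x \<noteq> 0" by blast
    then show False using U0 Mi_U[of 1] by auto
  qed
  ultimately show ?thesis using math unfolding U_def nontrivial_subspace_def by blast
qed

end
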